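(* For $n \in \mathbb{N}_0$ let $\lambda(n)$ denote the number of leading $1$s in the binary expansion of $n$ (so $\lambda(0)=0$, and e.g. $\lambda(123)=\lambda([1111011]_2)=4$). Define $f\colon\mathbb{N}_0\to\{0,1\}$ by $f(n)=1$ if $\lambda(n)$ is prime and $f(n)=0$ otherwise. Then $f$ is asymptotically $2$-automatic but there is no $2$-automatic sequence $\tilde f\colon\mathbb{N}_0\to\{0,1\}$ with $f\simeq\tilde f$.
   Context: $\mathbb{N}_0=\{0,1,2,\dots\}$. A property holds for almost all $n\in\mathbb{N}_0$ if the set of $n$ where it fails has upper density $\limsup_{N\to\infty}|\cdot\cap\{0,\dots,N-1\}|/N$ equal to $0$. Sequences $f,g$ are asymptotically equal, $f\simeq g$, if $f(n)=g(n)$ for almost all $n$. The $k$-kernel of $f$ is $\mathcal{N}_k(f) = \{ n \mapsto f(k^\alpha n + r) : \alpha, r \in \mathbb{N}_0,\ r < k^\alpha\}$; $f$ is $k$-automatic if $\mathcal{N}_k(f)$ is finite, and asymptotically $k$-automatic if $\mathcal{N}_k(f)/{\simeq}$ is finite. *)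

theory Defs
  imports "HOL-Analysis.Analysis" "HOL-Library.Liminf_Limsup" "HOL-Computational_Algebra.Primes"
begin

fun bin_digits :: "nat \<Rightarrow> nat list" where
  "bin_digits n = (if n = 0 then [] else bin_digits (n div 2) @ [n mod 2])"

declare bin_digits.simps [simp del]

definition leading_ones :: "nat \<Rightarrow> nat" where
  "leading_ones n = length (takeWhile (\<lambda>d. d = 1) (bin_digits n))"

definition upper_density :: "nat set \<Rightarrow> ereal" where
  "upper_density A = limsup (\<lambda>N. ereal (real (card (A \<inter> {..<N})) / real N))"

definition almost_all :: "(nat \<Rightarrow> bool) \<Rightarrow> bool" where
  "almost_all P \<longleftrightarrow> upper_density {n. \<not> P n} = 0"

definition asymp_eq :: "(nat \<Rightarrow> 'a) \<Rightarrow> (nat \<Rightarrow> 'a) \<Rightarrow> bool" where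
  "asymp_eq f g \<longleftrightarrow> almost_all (\<lambda>n. f n = g n)"

definition kernel :: "nat \<Rightarrow> (nat \<Rightarrow> 'a) \<Rightarrow> (nat \<Rightarrow> 'a) set" where
  "kernel k f = {(\<lambda>n. f (k ^ a * n + r)) | a r. r < k ^ a}"

definition automatic :: "nat \<Rightarrow> (nat \<Rightarrow> 'a) \<Rightarrow> bool" where
  "automatic k f \<longleftrightarrow> finite (kernel k f)"

definition asymp_automatic :: "nat \<Rightarrow> (nat \<Rightarrow> 'a) \<Rightarrow> bool" where
  "asymp_automatic k f \<longleftrightarrow>
     finite ((\<lambda>g. {h \<in> kernel k f. asymp_eq g h}) ` kernel k f)"

end

theory Submission
  imports Defs
begin

lemma bin_pos: "n > 0 \<Longrightarrow> bin_digits n = bin_digits (n div 2) @ [n mod 2]"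
  by (subst bin_digits.simps) simp

lemma bin_zero[simp]: "bin_digits 0 = []"
  by (subst bin_digits.simps) simp

fun pad :: "nat \<Rightarrow> nat \<Rightarrow> nat list" where
  "pad 0 r = []"
| "pad (Suc a) r = pad a (r div 2) @ [r mod 2]"

lemma bin_shift: "n > 0 \<Longrightarrow> r < 2 ^ a \<Longrightarrow> bin_digits (2 ^ a * n + r) = bin_digits n @ pad a r"
proof (induction a arbitrary: r)
  case 0
  then show ?case by simp
next
  case (Suc a)
  have pos: "2 ^ Suc a * n + r > 0" using Suc.prems by simp
  have d: "(2 ^ Suc a * n + r) div 2 = 2 ^ a * n + r div 2" by simp
  have m: "(2 ^ Suc a * n + r) mod 2 = r mod 2" by (simp add: mult.assoc)
  have "r div 2 < 2 ^ a" using Suc.prems by (simp add: less_mult_imp_div_less mult.commute)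
  then show ?case using Suc.IH[of "r div 2"] Suc.prems bin_pos[OF pos] d m by simp
qed

lemma bin_all_ones: "(\<forall>d\<in>set (bin_digits n). d = 1) \<Longrightarrow> n = 2 ^ length (bin_digits n) - 1"
proof (induction n rule: nat_less_induct)
  case (1 n)
  show ?case
  proof (cases "n = 0")
    case True then show ?thesis by simp
  next
    case False
    then have b: "bin_digits n = bin_digits (n div 2) @ [n mod 2]" by (intro bin_pos) simp
    have all: "\<forall>d\<in>set (bin_digits (n div 2)). d = 1" and m1: "n mod 2 = 1"
      using "1.prems" unfolding b by simp_all
    have lt: "n div 2 < n" using False by simp
    have IH: "n div 2 = 2 ^ length (bin_digits (n div 2)) - 1"
      using "1.IH" lt all by blast
    from m1 have "n = 2 * (n div 2) + 1" by presburger
    moreover have "(1::nat) \<le> 2 ^ length (bin_digits (n div 2))" by simp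
    ultimately have "n = 2 ^ Suc (length (bin_digits (n div 2))) - 1"
      using IH unfolding power_Suc by linarith
    then show ?thesis unfolding b by simp
  qed
qed

lemma bin_ones: "bin_digits (2 ^ p - 1) = replicate p 1"
proof (induction p)
  case 0 then show ?case by simp
next
  case (Suc p)
  have "(1::nat) < 2 ^ Suc p" by (rule one_less_power) auto
  then have pos: "(2::nat) ^ Suc p - 1 > 0" by simp
  have "(1::nat) \<le> 2 ^ p" by simp
  then have e: "(2::nat) ^ Suc p - 1 = 2 * (2 ^ p - 1) + 1" unfolding power_Suc by linarith
  have d: "((2::nat) ^ Suc p - 1) div 2 = 2 ^ p - 1" unfolding e by simp
  have m: "((2::nat) ^ Suc p - 1) mod 2 = 1" unfolding e by simp
  have "bin_digits (2 ^ Suc p - 1) = bin_digits ((2 ^ Suc p - 1) div 2) @ [(2 ^ Suc p - 1) mod 2]"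
    by (rule bin_pos[OF pos])
  also have "\<dots> = replicate p 1 @ [1]" unfolding d m Suc.IH ..
  also have "\<dots> = replicate (Suc p) 1" by (simp add: replicate_append_same)
  finally show ?case .
qed

lemma bin_double:
  assumes "m > 0" shows "bin_digits (2 * m) = bin_digits m @ [0]"
proof -
  have "bin_digits (2 * m) = bin_digits ((2 * m) div 2) @ [(2 * m) mod 2]"
    by (rule bin_pos) (use assms in simp)
  then show ?thesis by simp
qed

lemma lo_shift:
  assumes "\<nexists>k. n = 2 ^ k - 1" "r < 2 ^ a"
  shows "leading_ones (2 ^ a * n + r) = leading_ones n"
proof -
  have "n \<noteq> 2 ^ 0 - 1" using assms(1) by blast
  then have n0: "n > 0" by simp
  have b: "bin_digits (2 ^ a * n + r) = bin_digits n @ pad a r" by (rule bin_shift[OF n0 assms(2)])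
  have "\<exists>d\<in>set (bin_digits n). d \<noteq> 1" using bin_all_ones assms(1) by blast
  then obtain d where "d \<in> set (bin_digits n)" "\<not> d = 1" by blast
  then have "takeWhile (\<lambda>d. d = 1) (bin_digits n @ pad a r) = takeWhile (\<lambda>d. d = 1) (bin_digits n)"
    by (rule takeWhile_append1)
  then show ?thesis unfolding leading_ones_def b by simp
qed

lemma lo_special:
  assumes "p > 0" "r < 2 ^ a"
  shows "leading_ones (2 ^ Suc a * (2 ^ p - 1) + r) = p"
proof -
  have e: "2 ^ Suc a * (2 ^ p - 1) + r = 2 ^ a * (2 * (2 ^ p - 1)) + r" by simp
  have "(1::nat) < 2 ^ p" using assms by (intro one_less_power) auto
  then have pos: "(2::nat) ^ p - 1 > 0" by simp
  have pos2: "2 * ((2::nat) ^ p - 1) > 0" using pos by simp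
  have "bin_digits (2 ^ Suc a * (2 ^ p - 1) + r) = bin_digits (2 * (2 ^ p - 1)) @ pad a r"
    unfolding e by (rule bin_shift[OF pos2 assms(2)])
  also have "\<dots> = (bin_digits (2 ^ p - 1) @ [0]) @ pad a r" unfolding bin_double[OF pos] ..
  also have "\<dots> = replicate p 1 @ 0 # pad a r" unfolding bin_ones by simp
  finally have b: "bin_digits (2 ^ Suc a * (2 ^ p - 1) + r) = replicate p 1 @ 0 # pad a r" .
  have "takeWhile (\<lambda>d. d = 1) (replicate p (1::nat) @ 0 # pad a r) = replicate p 1"
    by (induction p) auto
  then show ?thesis unfolding leading_ones_def b by simp
qed

lemma dens_pow:
  assumes "D \<subseteq> {n. \<exists>k. n = 2 ^ k - 1}"
  shows "upper_density D = 0"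
proof -
  define r where "r N = real (card (D \<inter> {..<N})) / real N" for N
  define h where "h N = 1 / real N + (ln (real N) / real N) / ln 2" for N :: nat
  have h0: "h \<longlonglongrightarrow> 0"
  proof -
    have "(\<lambda>N. 1 / real N + (ln (real N) / real N) / ln 2) \<longlonglongrightarrow> 0 + 0 / ln 2"
      by (intro tendsto_add tendsto_divide lim_ln_over_n lim_1_over_n tendsto_const) auto
    then show ?thesis unfolding h_def by simp
  qed
  have bnd: "r N \<le> h N" if "N \<ge> 1" for N
  proof -
    define M where "M = nat \<lfloor>log 2 (real N)\<rfloor>"
    have sub: "D \<inter> {..<N} \<subseteq> (\<lambda>k. 2 ^ k - 1) ` {..M}"
    proof
      fix x assume "x \<in> D \<inter> {..<N}"
      then obtain k where k: "x = 2 ^ k - 1" "x < N" using assms by auto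
      then have "2 ^ k \<le> N" by simp
      then have "real k \<le> log 2 (real N)" using le_log2_of_power by blast
      then have "k \<le> M" unfolding M_def by linarith
      then show "x \<in> (\<lambda>k. 2 ^ k - 1) ` {..M}" using k by auto
    qed
    have "card (D \<inter> {..<N}) \<le> card ((\<lambda>k. 2 ^ k - 1::nat) ` {..M})"
      by (rule card_mono[OF _ sub]) auto
    also have "\<dots> \<le> Suc M" using card_image_le[of "{..M}" "\<lambda>k. 2 ^ k - 1::nat"] by simp
    finally have c: "real (card (D \<inter> {..<N})) \<le> 1 + real M" by simp
    have "log 2 (real N) \<ge> 0" using that by simp
    then have "real M \<le> log 2 (real N)" unfolding M_def by linarith
    with c have "real (card (D \<inter> {..<N})) \<le> 1 + ln (real N) / ln 2" by (simp add: log_def)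
    then have "r N \<le> (1 + ln (real N) / ln 2) / real N"
      unfolding r_def using that by (simp add: divide_right_mono)
    also have "\<dots> = h N" unfolding h_def using that by (simp add: field_simps)
    finally show ?thesis .
  qed
  have "r \<longlonglongrightarrow> 0"
  proof (rule tendsto_sandwich[OF _ _ tendsto_const h0])
    show "\<forall>\<^sub>F N in sequentially. 0 \<le> r N" unfolding r_def by simp
    show "\<forall>\<^sub>F N in sequentially. r N \<le> h N"
      using bnd eventually_sequentially by blast
  qed
  then have "(\<lambda>N. ereal (r N)) \<longlonglongrightarrow> ereal 0" by (rule tendsto_ereal)
  then have "limsup (\<lambda>N. ereal (r N)) = ereal 0" by (intro lim_imp_Limsup) auto
  then show ?thesis unfolding upper_density_def r_def by (simp add: zero_ereal_def)
qed

lemma part1: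
  fixes f :: "nat \<Rightarrow> nat"
  assumes f: "\<And>n. f n = (if prime (leading_ones n) then 1 else 0)"
  shows "asymp_automatic 2 f"
proof -
  let ?K = "kernel 2 f"
  have diff: "asymp_eq h1 h2" if H: "h1 \<in> ?K" "h2 \<in> ?K" for h1 h2
  proof -
    obtain a r where h1: "h1 = (\<lambda>n. f (2 ^ a * n + r))" "r < 2 ^ a"
      using H(1) unfolding kernel_def by blast
    obtain b s where h2: "h2 = (\<lambda>n. f (2 ^ b * n + s))" "s < 2 ^ b"
      using H(2) unfolding kernel_def by blast
    have "{n. \<not> h1 n = h2 n} \<subseteq> {n. \<exists>k. n = 2 ^ k - 1}"
    proof
      fix n assume n: "n \<in> {n. \<not> h1 n = h2 n}"
      show "n \<in> {n. \<exists>k. n = 2 ^ k - 1}"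
      proof (rule ccontr)
        assume "n \<notin> {n. \<exists>k. n = 2 ^ k - 1}"
        then have "\<nexists>k. n = 2 ^ k - 1" by simp
        then have "h1 n = h2 n" using lo_shift h1 h2 f by simp
        then show False using n by simp
      qed
    qed
    then show ?thesis unfolding asymp_eq_def almost_all_def using dens_pow by blast
  qed
  have "(\<lambda>g. {h \<in> ?K. asymp_eq g h}) ` ?K \<subseteq> {?K}"
    using diff by auto
  then show ?thesis unfolding asymp_automatic_def using finite_subset by blast
qed

lemma part2:
  fixes f g :: "nat \<Rightarrow> nat"
  assumes f: "\<And>n. f n = (if prime (leading_ones n) then 1 else 0)"
    and g01: "\<forall>n. g n \<in> {0, 1}" and aut: "automatic 2 g" and ae: "asymp_eq f g"
  shows False
proof -
  define K where "K = kernel 2 g"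
  have finK: "finite K" using aut unfolding automatic_def K_def .
  define T where "T u = restrict (\<lambda>h. h u) K" for u :: nat
  have inK: "(\<lambda>n. g (2 ^ a * n + r)) \<in> K" if "r < 2 ^ a" for a r
    unfolding K_def kernel_def using that by blast
  have vals: "h u \<in> {0, 1}" if "h \<in> K" for h u
    using that g01 unfolding K_def kernel_def by auto
  have "T u \<in> (\<Pi>\<^sub>E h \<in> K. {0, 1})" for u
    unfolding T_def using vals by (simp add: restrict_PiE_iff)
  then have "range T \<subseteq> (\<Pi>\<^sub>E h \<in> K. {0, 1})" by (simp add: image_subset_iff)
  then have finT: "finite (range T)"
    using finite_PiE[OF finK] finite_subset by (metis finite.emptyI finite_insert)
  have clos: "(\<lambda>n. h (2 * n + 1)) \<in> K" if hK: "h \<in> K" for h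
  proof -
    obtain a r where h: "h = (\<lambda>n. g (2 ^ a * n + r))" "r < 2 ^ a"
      using hK unfolding K_def kernel_def by blast
    have "(\<lambda>n. h (2 * n + 1)) = (\<lambda>n. g (2 ^ Suc a * n + (2 ^ a + r)))"
      unfolding h by (simp add: algebra_simps)
    moreover have "2 ^ a + r < 2 ^ Suc a" using h by simp
    ultimately show ?thesis using inK[of "2 ^ a + r" "Suc a"] by simp
  qed
  have step: "T (2 * u + 1) = T (2 * v + 1)" if "T u = T v" for u v
  proof
    fix h
    show "T (2 * u + 1) h = T (2 * v + 1) h"
    proof (cases "h \<in> K")
      case True
      have "T u (\<lambda>n. h (2 * n + 1)) = T v (\<lambda>n. h (2 * n + 1))" using that by simp
      then show ?thesis using True clos[OF True] unfolding T_def by simp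
    next
      case False then show ?thesis unfolding T_def by simp
    qed
  qed
  have key: "g (2 ^ a * u + r) = g (2 ^ a * v + r)" if "T u = T v" "r < 2 ^ a" for u v a r
  proof -
    have "T u (\<lambda>n. g (2 ^ a * n + r)) = T v (\<lambda>n. g (2 ^ a * n + r))" using that by simp
    then show ?thesis using inK[OF that(2)] unfolding T_def by simp
  qed
  have ones: "2 * (2 ^ k - 1) + 1 = (2::nat) ^ Suc k - 1" for k
  proof -
    have "(1::nat) \<le> 2 ^ k" by simp
    then show ?thesis unfolding power_Suc by linarith
  qed
  have "\<not> inj (\<lambda>k. T (2 ^ k - 1))"
  proof
    assume "inj (\<lambda>k. T (2 ^ k - 1))"
    moreover have "finite (range (\<lambda>k. T (2 ^ k - 1)))"
      using finT by (rule finite_subset[rotated]) auto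
    ultimately have "finite (UNIV :: nat set)" using finite_imageD by blast
    then show False by simp
  qed
  then obtain i j where ij: "i < j" "T (2 ^ i - 1) = T (2 ^ j - 1)"
    unfolding inj_def by (metis linorder_neqE_nat)
  have per1: "T (2 ^ (i + m) - 1) = T (2 ^ (j + m) - 1)" for m
  proof (induction m)
    case 0 then show ?case using ij by simp
  next
    case (Suc m)
    then show ?case using step[OF Suc] ones by simp
  qed
  define d where "d = j - i"
  have d1: "d \<ge> 1" using ij unfolding d_def by simp
  have per2: "T (2 ^ k - 1) = T (2 ^ (k + d) - 1)" if "k \<ge> i" for k
    using per1[of "k - i"] that ij unfolding d_def by (simp add: add.commute)
  have per3: "T (2 ^ k - 1) = T (2 ^ (k + t * d) - 1)" if "k \<ge> i" for k t
  proof (induction t)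
    case 0 then show ?case by simp
  next
    case (Suc t)
    have "T (2 ^ (k + t * d) - 1) = T (2 ^ (k + t * d + d) - 1)"
      using per2[of "k + t * d"] that by simp
    then show ?case using Suc by (simp add: algebra_simps)
  qed
  obtain p where p: "prime p" "p > i" using bigger_prime by blast
  define q where "q = p + p * d"
  have p1: "p > 0" using p prime_gt_0_nat by blast
  have np: "\<not> prime q"
  proof
    assume "prime q"
    moreover have "q = p * (1 + d)" unfolding q_def by simp
    ultimately have "p = 1 \<or> 1 + d = 1" using prime_product by metis
    then show False using p d1 by auto
  qed
  have q1: "q > 0" "p < q" using p1 d1 unfolding q_def by auto
  define u where "u = (2::nat) ^ p - 1"
  define v where "v = (2::nat) ^ q - 1"
  have Tuv: "T u = T v" unfolding u_def v_def q_def using per3[of p p] p by simp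
  have uv: "u + 1 \<le> v"
  proof -
    have "(2::nat) ^ p < 2 ^ q" using q1 by simp
    moreover have "(1::nat) \<le> 2 ^ p" by simp
    ultimately show ?thesis unfolding u_def v_def by linarith
  qed
  have v1: "v + 1 = 2 ^ q" unfolding v_def by simp
  define E where "E = {n. \<not> f n = g n}"
  have E0: "upper_density E = 0" using ae unfolding asymp_eq_def almost_all_def E_def .
  have cnt: "2 ^ a \<le> card (E \<inter> {..<2 ^ (Suc a + q)})" for a
  proof -
    define c where "c = (2::nat) ^ Suc a"
    define x where "x r = c * u + r" for r
    define y where "y r = c * v + r" for r
    define \<phi> where "\<phi> r = (if x r \<in> E then x r else y r)" for r
    have c2: "c * v + c = 2 ^ (Suc a + q)"
      unfolding c_def power_add using v1 by (metis distrib_left mult.right_neutral)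
    have cuv: "c * u + c \<le> c * v" using uv mult_le_mono2[OF uv, of c] by (simp add: distrib_left)
    have mem: "\<phi> r \<in> E" if "r < 2 ^ a" for r
    proof -
      have r2: "r < 2 ^ Suc a" using that by simp
      have eq: "g (x r) = g (y r)" unfolding x_def y_def c_def using key[OF Tuv r2] .
      have fx: "f (x r) = 1" unfolding x_def c_def u_def using f lo_special[OF p1 that] p by simp
      have fy: "f (y r) = 0" unfolding y_def c_def v_def using f lo_special[OF q1(1) that] np by simp
      show ?thesis unfolding \<phi>_def E_def using eq fx fy by auto
    qed
    have bnd: "\<phi> r < 2 ^ (Suc a + q)" if "r < 2 ^ a" for r
    proof -
      have "r < c" using that unfolding c_def by simp
      then show ?thesis unfolding \<phi>_def x_def y_def using c2 cuv by auto
    qed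
    have inj: "inj_on \<phi> {..<2 ^ a}"
    proof
      fix r s assume r: "r \<in> {..<2 ^ a}" and s: "s \<in> {..<2 ^ a}" and e: "\<phi> r = \<phi> s"
      have rc: "r < c" "s < c" using r s unfolding c_def by auto
      have "x r < y s" "x s < y r" unfolding x_def y_def using rc cuv by auto
      then show "r = s" using e unfolding \<phi>_def x_def y_def by (auto split: if_splits)
    qed
    have "card {..<(2::nat) ^ a} \<le> card (E \<inter> {..<2 ^ (Suc a + q)})"
      by (rule card_inj_on_le[OF inj]) (use mem bnd in auto)
    then show ?thesis by simp
  qed
  define X where "X N = ereal (real (card (E \<inter> {..<N})) / real N)" for N
  have Xge: "X (2 ^ (Suc a + q)) \<ge> ereal (1 / 2 ^ Suc q)" for a
  proof -
    have "real (2 ^ a) \<le> real (card (E \<inter> {..<2 ^ (Suc a + q)}))" using cnt[of a] by linarith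
    then have "real (2 ^ a) / real (2 ^ (Suc a + q)) \<le> real (card (E \<inter> {..<2 ^ (Suc a + q)})) / real (2 ^ (Suc a + q))"
      by (intro divide_right_mono) auto
    moreover have "real (2 ^ a) / real (2 ^ (Suc a + q)) = 1 / 2 ^ Suc q"
      by (simp add: power_add)
    ultimately show ?thesis unfolding X_def by simp
  qed
  have "limsup X = 0" using E0 unfolding upper_density_def X_def .
  then have "eventually (\<lambda>N. X N < ereal (1 / 2 ^ Suc q)) sequentially"
    by (intro Limsup_lessD) simp
  then obtain M where M: "\<And>N. N \<ge> M \<Longrightarrow> X N < ereal (1 / 2 ^ Suc q)"
    unfolding eventually_sequentially by blast
  have "M < 2 ^ M" by (rule less_exp)
  moreover have "(2::nat) ^ M \<le> 2 ^ (Suc M + q)" by (rule power_increasing) auto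
  ultimately have "M \<le> 2 ^ (Suc M + q)" by linarith
  then have "X (2 ^ (Suc M + q)) < ereal (1 / 2 ^ Suc q)" by (rule M)
  then show False using Xge[of M] by simp
qed

theorem proposition3p1:
  fixes f :: "nat \<Rightarrow> nat"
  assumes "\<And>n. f n = (if prime (leading_ones n) then 1 else 0)"
  shows "asymp_automatic 2 f \<and>
         \<not> (\<exists>g :: nat \<Rightarrow> nat. (\<forall>n. g n \<in> {0, 1}) \<and> automatic 2 g \<and> asymp_eq f g)"
  using part1[OF assms] part2[OF assms] by blast

end
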